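(* $\mathrm{Ldim}(\mathcal N)=\infty$: for every $m\in\mathbb N$ there is a complete binary tree of depth $m$ shattered by $\mathcal N$.
   Context: $\mathcal N$ is the set of functions $f:[-1,1]\to\mathbb R$ of the form $f(x)=a_1\mathrm{ReLU}(w_1x+b_1)+a_2\mathrm{ReLU}(w_2x+b_2)+b$ with $w_1,w_2,b_1,b_2,a_1,a_2,b\in[-1,1]$, where $\mathrm{ReLU}(z)=\max\{0,z\}$. A complete binary tree of depth $m$ has internal nodes $v$ labeled by $x_v\in[-1,1]$, and the two edges leaving each internal node are labeled by two distinct real numbers; it is shattered by $\mathcal N$ if for every root-to-leaf path there exists $f\in\mathcal N$ with $f(x_v)$ equal to the label of the path's outgoing edge at $v$ for every node $v$ on the path. $\mathrm{Ldim}(\mathcal N)$ (the Littlestone dimension under $0/1$ loss) is the supremum of depths of shattered trees. *)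

theory Defs
  imports "HOL-Library.Extended_Nat" Complex_Main
begin

definition relu :: "real \<Rightarrow> real" where
  "relu z = max 0 z"

text \<open>The class N of two-neuron ReLU networks with all parameters in [-1,1].
  Functions are represented as real => real; only their values on [-1,1] matter,
  since all node labels lie in [-1,1].\<close>
definition NN :: "(real \<Rightarrow> real) set" where
  "NN = {f. \<exists>w1 w2 b1 b2 a1 a2 b.
      w1 \<in> {-1..1} \<and> w2 \<in> {-1..1} \<and> b1 \<in> {-1..1} \<and> b2 \<in> {-1..1} \<and>
      a1 \<in> {-1..1} \<and> a2 \<in> {-1..1} \<and> b \<in> {-1..1} \<and>
      f = (\<lambda>x. a1 * relu (w1 * x + b1) + a2 * relu (w2 * x + b2) + b)}"

text \<open>A complete binary tree of depth m: internal nodes are bit strings v with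
  length v < m (the root is []); node v is labelled by X v, and the edge leaving v
  in direction d is labelled by Y v d. A root-to-leaf path is a bit string p with
  length p = m; its i-th node is take i p and the outgoing edge there is p ! i.\<close>
definition shattered_tree ::
  "(real \<Rightarrow> real) set \<Rightarrow> nat \<Rightarrow> (bool list \<Rightarrow> real) \<Rightarrow> (bool list \<Rightarrow> bool \<Rightarrow> real) \<Rightarrow> bool" where
  "shattered_tree H m X Y \<longleftrightarrow>
     (\<forall>v. length v < m \<longrightarrow> X v \<in> {-1..1} \<and> Y v True \<noteq> Y v False) \<and>
     (\<forall>p. length p = m \<longrightarrow>
        (\<exists>f\<in>H. \<forall>i<m. f (X (take i p)) = Y (take i p) (p ! i)))"

definition ldim :: "(real \<Rightarrow> real) set \<Rightarrow> enat" where
  "ldim H = Sup {enat m | m. \<exists>X Y. shattered_tree H m X Y}"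

end

theory Submission
  imports Defs
begin

fun bv :: "bool list \<Rightarrow> nat" where
  "bv [] = 0"
| "bv (b # bs) = (if b then 2 ^ length bs else 0) + bv bs"

lemma bv_append: "bv (xs @ ys) = bv xs * 2 ^ length ys + bv ys"
  by (induction xs) (auto simp: algebra_simps power_add)

lemma bv_less: "bv xs < 2 ^ length xs"
  by (induction xs) auto

definition KK :: "nat \<Rightarrow> bool list \<Rightarrow> nat" where
  "KK m v = bv v * 2 ^ (m - length v) + 2 ^ (m - length v - 1)"

lemma key:
  assumes "length p = m" "i < m"
  shows "(p ! i \<longrightarrow> KK m (take i p) \<le> bv p) \<and> (\<not> p ! i \<longrightarrow> bv p + 1 \<le> KK m (take i p))"
proof -
  define r where "r = m - i - 1"
  define d where "d = drop (Suc i) p"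
  have ld: "length d = r" using assms unfolding d_def r_def by simp
  have lt: "length (take i p) = i" using assms by simp
  have dec: "p = take i p @ (p ! i) # d"
    using assms unfolding d_def by (simp add: Cons_nth_drop_Suc)
  have e1: "m - i = Suc r" using assms unfolding r_def by simp
  have bp: "bv p = bv (take i p) * 2 ^ Suc r + ((if p ! i then 2 ^ r else 0) + bv d)"
    by (subst dec) (simp add: bv_append ld)
  have K: "KK m (take i p) = bv (take i p) * 2 ^ Suc r + 2 ^ r"
    unfolding KK_def lt e1 by simp
  have "bv d < 2 ^ r" using bv_less[of d] ld by simp
  then show ?thesis using bp K by auto
qed

lemma KK_bounds:
  assumes "length v < m"
  shows "1 \<le> KK m v \<and> KK m v < 2 ^ m"
proof -
  define r where "r = m - length v - 1"
  have e1: "m - length v = Suc r" using assms unfolding r_def by simp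
  have "bv v + 1 \<le> 2 ^ length v" using bv_less[of v] by simp
  hence "(bv v + 1) * 2 ^ Suc r \<le> 2 ^ length v * 2 ^ Suc r" by (rule mult_right_mono) simp
  also have "\<dots> = 2 ^ (length v + Suc r)" by (simp add: power_add)
  also have "length v + Suc r = m" using e1 assms by simp
  finally have "(bv v + 1) * 2 ^ Suc r \<le> (2::nat) ^ m" .
  moreover have "KK m v = bv v * 2 ^ Suc r + 2 ^ r" unfolding KK_def e1 by simp
  moreover have "(1::nat) \<le> 2 ^ r" by simp
  moreover have "(bv v + 1) * 2 ^ Suc r = bv v * 2 ^ Suc r + 2 ^ r + (2::nat) ^ r" by simp
  ultimately show ?thesis by linarith
qed

lemma bv_bound: "length p = m \<Longrightarrow> bv p + 1 \<le> 2 ^ m"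
  using bv_less[of p] by simp

lemma shatter: "\<exists>X Y. shattered_tree NN m X Y"
proof -
  define N :: real where "N = 2 ^ m"
  have Npos: "N \<ge> 1" unfolding N_def by simp
  define X where "X v = (2 * real (KK m v) - 1) / (2 * N)" for v
  define Y :: "bool list \<Rightarrow> bool \<Rightarrow> real" where "Y v d = (if d then 0 else 1 / (2 * N))" for v d
  have part1: "\<forall>v. length v < m \<longrightarrow> X v \<in> {-1..1} \<and> Y v True \<noteq> Y v False"
  proof (intro allI impI)
    fix v :: "bool list" assume "length v < m"
    from KK_bounds[OF this] have a: "1 \<le> real (KK m v)" "real (KK m v) + 1 \<le> N"
      unfolding N_def by (simp, metis Suc_eq_plus1 Suc_leI of_nat_1 of_nat_add of_nat_le_iff of_nat_numeral of_nat_power)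
    have "X v \<ge> 0" unfolding X_def using a Npos by simp
    moreover have "X v \<le> 1" unfolding X_def using a Npos by (simp add: divide_le_eq)
    moreover have "Y v True \<noteq> Y v False" unfolding Y_def using Npos by simp
    ultimately show "X v \<in> {-1..1} \<and> Y v True \<noteq> Y v False" by simp
  qed
  have part2: "\<exists>f\<in>NN. \<forall>i<m. f (X (take i p)) = Y (take i p) (p ! i)" if lp: "length p = m" for p
  proof -
    define k where "k = real (bv p)"
    have kb: "k + 1 \<le> N" "0 \<le> k" unfolding k_def N_def using bv_bound[OF lp]
      by (simp, metis Suc_eq_plus1 Suc_leI of_nat_1 of_nat_add of_nat_le_iff of_nat_numeral of_nat_power bv_less lp) simp
    define A where "A = (2 * k) / (2 * N)"
    define B where "B = (2 * k + 1) / (2 * N)"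
    have BA: "B - A = 1 / (2 * N)" unfolding A_def B_def using Npos by (simp add: field_simps)
    define f where "f x = 1 * relu (1 * x + (- A)) + (-1) * relu (1 * x + (- B)) + 0" for x
    have "f \<in> NN" unfolding NN_def
    proof (intro CollectI exI conjI)
      show "f = (\<lambda>x. 1 * relu (1 * x + (- A)) + (-1) * relu (1 * x + (- B)) + 0)"
        unfolding f_def by (rule ext) simp
      have q1: "0 \<le> k / N" "k / N \<le> 1" using kb Npos by (simp_all add: divide_le_eq)
      show "- A \<in> {-1..1}" using q1 unfolding A_def by simp
      have q2: "0 \<le> (2 * k + 1) / (2 * N)" "(2 * k + 1) / (2 * N) \<le> 1" using kb Npos by (simp_all add: divide_le_eq)
      show "- B \<in> {-1..1}" using q2 unfolding B_def by simp
    qed auto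
    moreover have "\<forall>i<m. f (X (take i p)) = Y (take i p) (p ! i)"
    proof (intro allI impI)
      fix i assume "i < m"
      note kk = key[OF lp this]
      define K where "K = real (KK m (take i p))"
      show "f (X (take i p)) = Y (take i p) (p ! i)"
      proof (cases "p ! i")
        case True
        hence "K \<le> k" using kk unfolding K_def k_def by simp
        hence "2 * K - 1 \<le> 2 * k" "2 * K - 1 \<le> 2 * k + 1" by auto
        hence "X (take i p) \<le> A" "X (take i p) \<le> B"
          unfolding X_def K_def[symmetric] A_def B_def using Npos by (intro divide_right_mono; simp)+
        then show ?thesis unfolding f_def Y_def relu_def using True by simp
      next
        case False
        hence "k + 1 \<le> K" using kk unfolding K_def k_def by simp
        hence "2 * k + 1 \<le> 2 * K - 1" by auto
        hence "X (take i p) \<ge> B"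
          unfolding X_def K_def[symmetric] B_def using Npos by (intro divide_right_mono; simp)
        moreover have "0 \<le> 1 / (2 * N)" using Npos by simp
        hence "B \<ge> A" using BA by linarith
        ultimately show ?thesis unfolding f_def Y_def relu_def using False BA
          by (simp add: max_def)
      qed
    qed
    ultimately show ?thesis by blast
  qed
  show ?thesis unfolding shattered_tree_def using part1 part2 by blast
qed

theorem theoremE1:
  shows "ldim NN = \<infinity> \<and> (\<forall>m::nat. \<exists>X Y. shattered_tree NN m X Y)"
proof -
  have S: "{enat m | m. \<exists>X Y. shattered_tree NN m X Y} = range enat"
    using shatter by auto
  have "infinite (range enat)" by (simp add: finite_image_iff inj_on_def)
  hence "Sup (range enat) = \<infinity>" by (simp add: Sup_enat_def)
  then show ?thesis unfolding ldim_def S using shatter by simp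
qed

end
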